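(* Consider the system $$\frac{dx_1}{dt}=x_1\Big[r_1\Big(1-\frac{x_1}{K_1}\Big)-\frac{a x_2}{1+h a x_1}\Big],\qquad \frac{dx_2}{dt}=x_2\Big[\frac{e a x_1}{1+h a x_1}-d+r_2\Big(1-\frac{x_2}{K_2}\Big)\Big]$$ on $X=\mathbb R^2_+$, with constants $r_1,r_2,K_1,K_2,a,h,e>0$ and $d\ge0$. Then: (i) the host $x_1$ is persistent in $X$ if $d>r_2$ or $\frac{r_1}{a}>K_2\big(1-\frac{d}{r_2}\big)>0$; (ii) the parasite $x_2$ is persistent in $X$ if $r_2+\frac{eaK_1}{1+ahK_1}>d$; (iii) the system is permanent in $X$ if either $r_2+\frac{eaK_1}{1+ahK_1}>d>r_2$ or $\frac{r_1}{a}>K_2\big(1-\frac{d}{r_2}\big)>0$.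
   Context: A species $x_i$ is persistent if there is $\varepsilon>0$ such that $\liminf_{t\to\infty}x_i(t)\ge\varepsilon$ for every solution with $x_1(0)>0$ and $x_2(0)>0$; the system is permanent if both species are persistent. *)

theory Defs
  imports "HOL-Analysis.Analysis"
begin

definition hp_solution ::
  "real \<Rightarrow> real \<Rightarrow> real \<Rightarrow> real \<Rightarrow> real \<Rightarrow> real \<Rightarrow> real \<Rightarrow> real
   \<Rightarrow> (real \<Rightarrow> real) \<Rightarrow> (real \<Rightarrow> real) \<Rightarrow> bool" where
  "hp_solution r1 r2 K1 K2 a h e d x1 x2 \<longleftrightarrow>
     (\<forall>t\<ge>0.
        (x1 has_real_derivative
           (x1 t * (r1 * (1 - x1 t / K1) - a * x2 t / (1 + h * a * x1 t))))
           (at t within {0..}) \<and>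
        (x2 has_real_derivative
           (x2 t * (e * a * x1 t / (1 + h * a * x1 t) - d + r2 * (1 - x2 t / K2))))
           (at t within {0..}))"

definition species :: "nat \<Rightarrow> (real \<Rightarrow> real) \<Rightarrow> (real \<Rightarrow> real) \<Rightarrow> real \<Rightarrow> real" where
  "species i x1 x2 = (if i = 1 then x1 else x2)"

definition persistent ::
  "((real \<Rightarrow> real) \<Rightarrow> (real \<Rightarrow> real) \<Rightarrow> bool) \<Rightarrow> nat \<Rightarrow> bool" where
  "persistent sol i \<longleftrightarrow>
     (\<exists>\<epsilon>>0. \<forall>x1 x2. sol x1 x2 \<and> x1 0 > 0 \<and> x2 0 > 0 \<longrightarrow>
        Liminf at_top (\<lambda>t. ereal (species i x1 x2 t)) \<ge> ereal \<epsilon>)"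

definition permanent :: "((real \<Rightarrow> real) \<Rightarrow> (real \<Rightarrow> real) \<Rightarrow> bool) \<Rightarrow> bool" where
  "permanent sol \<longleftrightarrow> persistent sol 1 \<and> persistent sol 2"

end

theory Submission
  imports Defs
begin


lemma mono_from_deriv:
  fixes V :: "real \<Rightarrow> real"
  assumes "s \<le> t" "continuous_on {s..t} V"
    "\<And>x. s < x \<Longrightarrow> x < t \<Longrightarrow> (V has_real_derivative D x) (at x)"
    "\<And>x. s < x \<Longrightarrow> x < t \<Longrightarrow> D x \<ge> g"
  shows "V t - g * t \<ge> V s - g * s"
proof -
  have "(\<lambda>x. V x - g * x) s \<le> (\<lambda>x. V x - g * x) t"
  proof (rule DERIV_nonneg_imp_increasing_open[OF assms(1)])
    fix x assume x: "s < x" "x < t"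
    have "((\<lambda>x. V x - g * x) has_real_derivative D x - g) (at x)"
      using assms(3)[OF x] by (auto intro!: derivative_eq_intros)
    thus "\<exists>y. ((\<lambda>x. V x - g * x) has_real_derivative y) (at x) \<and> 0 \<le> y"
      using assms(4)[OF x] by auto
  next
    show "continuous_on {s..t} (\<lambda>x. V x - g * x)"
      using assms(2) by (auto intro!: continuous_intros)
  qed
  thus ?thesis by simp
qed

lemma excursion:
  fixes y W V D :: "real \<Rightarrow> real"
  assumes cy: "continuous_on {T..} y" and cV: "continuous_on {T..} V"
    and dV: "\<And>t. t > T \<Longrightarrow> (V has_real_derivative D t) (at t)"
    and VyW: "\<And>t. t \<ge> T \<Longrightarrow> V t = y t + W t"
    and cond: "\<And>t. t > T \<Longrightarrow> y t \<le> A \<Longrightarrow> D t \<ge> g"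
    and g: "g > 0"
    and Wb: "\<And>t. t \<ge> T \<Longrightarrow> Wlo \<le> W t \<and> W t \<le> Whi"
  shows "\<exists>T'. \<forall>t\<ge>T'. A - (Whi - Wlo) \<le> y t"
proof -
  have "\<exists>t0\<ge>T. y t0 > A"
  proof (rule ccontr)
    assume "\<not> ?thesis"
    hence le: "\<And>t. t \<ge> T \<Longrightarrow> y t \<le> A" by (meson not_less)
    define t where "t = T + (A + Whi - V T) / g + 1"
    have "V T + g * (t - T) > A + Whi" unfolding t_def using g
      by (simp add: field_simps)
    moreover have tT: "t \<ge> T" unfolding t_def using g VyW[of T] Wb[of T] le[of T]
      by (simp add: field_simps)
    moreover have "V t - g * t \<ge> V T - g * T"
      by (rule mono_from_deriv[OF tT continuous_on_subset[OF cV]])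
         (auto intro: dV cond le[OF less_imp_le])
    moreover have "V t \<le> A + Whi" using VyW[OF tT] le[OF tT] Wb[OF tT] by simp
    ultimately show False by (simp add: algebra_simps)
  qed
  then obtain t0 where t0: "t0 \<ge> T" "y t0 > A" by auto
  have "A - (Whi - Wlo) \<le> y t" if tt: "t \<ge> t0" for t
  proof (cases "y t \<ge> A")
    case True thus ?thesis using Wb[of t0] t0 by simp
  next
    case False
    define S where "S = {\<tau> \<in> {t0..t}. A \<le> y \<tau>}"
    have cyS: "continuous_on {t0..t} y" using cy by (rule continuous_on_subset) (use t0 in auto)
    have "closed S" unfolding S_def
      by (rule continuous_on_closed_Collect_le[OF continuous_on_const cyS]) simp
    moreover have "t0 \<in> S" using t0 tt unfolding S_def by simp
    moreover have "bdd_above S" unfolding S_def by (auto intro: bdd_aboveI[of _ t])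
    ultimately have sS: "Sup S \<in> S" by (metis closed_contains_Sup empty_iff)
    define s where "s = Sup S"
    have s: "t0 \<le> s" "s \<le> t" "A \<le> y s" using sS unfolding s_def S_def by auto
    have above: "y x < A" if "s < x" "x \<le> t" for x
    proof (rule ccontr)
      assume "\<not> y x < A"
      hence "x \<in> S" using that s unfolding S_def by auto
      hence "x \<le> s" unfolding s_def using \<open>bdd_above S\<close> by (simp add: cSup_upper)
      thus False using that by simp
    qed
    have "V t - 0 * t \<ge> V s - 0 * s"
      by (rule mono_from_deriv[OF s(2) continuous_on_subset[OF cV]])
        (use s t0 g in \<open>auto intro: dV intro!: order.trans[OF _ cond] less_imp_le[OF above]\<close>)
    hence "y t + W t \<ge> y s + W s" using VyW[of t] VyW[of s] s t0 tt by simp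
    thus ?thesis using Wb[of t] Wb[of s] s t0 tt by simp
  qed
  thus ?thesis by blast
qed


locale hp =
  fixes r1 r2 K1 K2 a h e d :: real and x1 x2 :: "real \<Rightarrow> real"
  assumes r1: "r1 > 0" and r2: "r2 > 0" and K1: "K1 > 0" and K2: "K2 > 0"
    and a: "a > 0" and h: "h > 0" and e: "e > 0" and d: "d \<ge> 0"
    and sol: "hp_solution r1 r2 K1 K2 a h e d x1 x2"
    and i1: "x1 0 > 0" and i2: "x2 0 > 0"
begin

definition "G1 t = r1 * (1 - x1 t / K1) - a * x2 t / (1 + h * a * x1 t)"
definition "G2 t = e * a * x1 t / (1 + h * a * x1 t) - d + r2 * (1 - x2 t / K2)"

lemma dw1: "t \<ge> 0 \<Longrightarrow> (x1 has_real_derivative x1 t * G1 t) (at t within {0..})"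
  using sol unfolding hp_solution_def G1_def by auto
lemma dw2: "t \<ge> 0 \<Longrightarrow> (x2 has_real_derivative x2 t * G2 t) (at t within {0..})"
  using sol unfolding hp_solution_def G2_def by auto

lemma at_eq: "t > 0 \<Longrightarrow> at t within {0::real..} = at t"
  by (rule at_within_interior) (simp add: interior_Ici[of "-1"])

lemma d1: "t > 0 \<Longrightarrow> (x1 has_real_derivative x1 t * G1 t) (at t)"
  using dw1[of t] at_eq[of t] by simp
lemma d2: "t > 0 \<Longrightarrow> (x2 has_real_derivative x2 t * G2 t) (at t)"
  using dw2[of t] at_eq[of t] by simp

lemma c1: "continuous_on {0..} x1"
  unfolding continuous_on_eq_continuous_within using dw1 DERIV_continuous
  by (metis atLeast_iff continuous_within_subset order_refl)
lemma c2: "continuous_on {0..} x2"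
  unfolding continuous_on_eq_continuous_within using dw2 DERIV_continuous
  by (metis atLeast_iff continuous_within_subset order_refl)

lemma bounded_on:
  fixes f :: "real \<Rightarrow> real"
  assumes "continuous_on {0..} f" "s \<ge> 0"
  shows "\<exists>B\<ge>0. \<forall>t\<in>{0..s}. \<bar>f t\<bar> \<le> B"
proof -
  have "compact (f ` {0..s})"
    by (rule compact_continuous_image[OF continuous_on_subset[OF assms(1)]]) auto
  then obtain B where "B > 0" "\<forall>y\<in>f ` {0..s}. norm y \<le> B"
    using compact_imp_bounded bounded_pos by metis
  thus ?thesis by (intro exI[of _ B]) auto
qed

lemma positive: "t \<ge> 0 \<Longrightarrow> x1 t > 0 \<and> x2 t > 0"
proof (rule ccontr)
  assume t: "t \<ge> 0" and nt: "\<not> (x1 t > 0 \<and> x2 t > 0)"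
  define S where "S = {\<tau> \<in> {0..}. x1 \<tau> \<le> 0} \<union> {\<tau> \<in> {0..}. x2 \<tau> \<le> 0}"
  have "closed S" unfolding S_def
    by (intro closed_Un continuous_on_closed_Collect_le c1 c2 continuous_on_const) auto
  moreover have "t \<in> S" using t nt unfolding S_def by auto
  moreover have bS: "bdd_below S" unfolding S_def by (auto intro: bdd_belowI[of _ 0])
  ultimately have sS: "Inf S \<in> S" by (metis closed_contains_Inf empty_iff)
  define s where "s = Inf S"
  have s0: "s \<ge> 0" using sS unfolding s_def S_def by auto
  have before: "x1 \<tau> > 0 \<and> x2 \<tau> > 0" if "0 \<le> \<tau>" "\<tau> < s" for \<tau>
  proof (rule ccontr)
    assume "\<not> ?thesis"
    hence "\<tau> \<in> S" using that unfolding S_def by auto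
    hence "s \<le> \<tau>" unfolding s_def using bS by (simp add: cInf_lower)
    thus False using that by simp
  qed
  have sp: "s > 0"
  proof (rule ccontr)
    assume "\<not> s > 0" hence "s = 0" using s0 by simp
    thus False using sS i1 i2 unfolding s_def S_def by auto
  qed
  obtain B1 where B1: "B1 \<ge> 0" "\<forall>t\<in>{0..s}. \<bar>x1 t\<bar> \<le> B1" using bounded_on[OF c1 s0] by auto
  obtain B2 where B2: "B2 \<ge> 0" "\<forall>t\<in>{0..s}. \<bar>x2 t\<bar> \<le> B2" using bounded_on[OF c2 s0] by auto
  define B where "B = max B1 B2"
  have B: "B \<ge> 0" "\<And>t. t \<in> {0..s} \<Longrightarrow> \<bar>x1 t\<bar> \<le> B \<and> \<bar>x2 t\<bar> \<le> B"
    using B1 B2 unfolding B_def by force+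
  define L1 where "L1 = r1 * (1 + B / K1) + a * B"
  define L2 where "L2 = e * a * B + d + r2 * (1 + B / K2)"
  have L: "L1 \<ge> 0" "L2 \<ge> 0" unfolding L1_def L2_def using B r1 r2 K1 K2 a e d by auto
  have Gb: "G1 \<tau> \<ge> - L1 \<and> G2 \<tau> \<ge> - L2" if "0 \<le> \<tau>" "\<tau> < s" for \<tau>
  proof -
    have p: "x1 \<tau> > 0" "x2 \<tau> > 0" using before that by auto
    have bb: "x1 \<tau> \<le> B" "x2 \<tau> \<le> B" using B(2)[of \<tau>] that by auto
    have den: "1 + h * a * x1 \<tau> \<ge> 1" using p h a by simp
    have q1: "a * x2 \<tau> / (1 + h * a * x1 \<tau>) \<le> a * B"
    proof -
      have "a * x2 \<tau> / (1 + h * a * x1 \<tau>) \<le> a * x2 \<tau>"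
        using divide_left_mono[of 1 "1 + h*a*x1 \<tau>" "a * x2 \<tau>"] den p a by simp
      also have "\<dots> \<le> a * B" using bb a by simp
      finally show ?thesis .
    qed
    have q2: "r1 * (1 - x1 \<tau> / K1) \<ge> - (r1 * (1 + B / K1))"
    proof -
      have "x1 \<tau> / K1 \<le> B / K1" using bb K1 by (simp add: divide_right_mono)
      hence "r1 * (x1 \<tau> / K1) \<le> r1 * (B / K1)" using r1 by (intro mult_left_mono) auto
      moreover have "r1 * (B / K1) \<ge> 0" using r1 B K1 by simp
      moreover have "r1 * (1 - x1 \<tau> / K1) = r1 - r1 * (x1 \<tau> / K1)" by (simp add: algebra_simps)
      ultimately show ?thesis using r1 by (simp add: algebra_simps)
    qed
    have q3: "e * a * x1 \<tau> / (1 + h * a * x1 \<tau>) \<ge> 0" using e a p den by simp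
    have q4: "r2 * (1 - x2 \<tau> / K2) \<ge> - (r2 * (1 + B / K2))"
    proof -
      have "x2 \<tau> / K2 \<le> B / K2" using bb K2 by (simp add: divide_right_mono)
      hence "r2 * (x2 \<tau> / K2) \<le> r2 * (B / K2)" using r2 by (intro mult_left_mono) auto
      moreover have "r2 * (B / K2) \<ge> 0" using r2 B K2 by simp
      moreover have "r2 * (1 - x2 \<tau> / K2) = r2 - r2 * (x2 \<tau> / K2)" by (simp add: algebra_simps)
      ultimately show ?thesis using r2 by (simp add: algebra_simps)
    qed
    show ?thesis unfolding G1_def G2_def L1_def L2_def using q1 q2 q3 q4 e a B d
      by (smt (verit) mult_nonneg_nonneg)
  qed
  have low: "x1 \<tau> \<ge> x1 0 * exp (- L1 * s) \<and> x2 \<tau> \<ge> x2 0 * exp (- L2 * s)"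
    if "0 \<le> \<tau>" "\<tau> < s" for \<tau>
  proof -
    have cont: "continuous_on {0..\<tau>} (\<lambda>t. ln (x1 t))" "continuous_on {0..\<tau>} (\<lambda>t. ln (x2 t))"
    proof -
      have pp: "x1 t > 0" "x2 t > 0" if "t \<in> {0..\<tau>}" for t
        using before[of t] that \<open>\<tau> < s\<close> by auto
      show "continuous_on {0..\<tau>} (\<lambda>t. ln (x1 t))" "continuous_on {0..\<tau>} (\<lambda>t. ln (x2 t))"
        using pp by (auto intro!: continuous_intros continuous_on_subset[OF c1] continuous_on_subset[OF c2]
           simp del: atLeastAtMost_iff) fastforce+
    qed
    have m1: "ln (x1 \<tau>) - (- L1) * \<tau> \<ge> ln (x1 0) - (- L1) * 0"
    proof (rule mono_from_deriv[OF that(1) cont(1)])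
      fix y assume y: "0 < y" "y < \<tau>"
      have "x1 y > 0" using before y that by auto
      thus "((\<lambda>t. ln (x1 t)) has_real_derivative G1 y) (at y)"
        using d1[of y] y by (auto intro!: derivative_eq_intros)
      show "G1 y \<ge> - L1" using Gb y that by auto
    qed
    have m2: "ln (x2 \<tau>) - (- L2) * \<tau> \<ge> ln (x2 0) - (- L2) * 0"
    proof (rule mono_from_deriv[OF that(1) cont(2)])
      fix y assume y: "0 < y" "y < \<tau>"
      have "x2 y > 0" using before y that by auto
      thus "((\<lambda>t. ln (x2 t)) has_real_derivative G2 y) (at y)"
        using d2[of y] y by (auto intro!: derivative_eq_intros)
      show "G2 y \<ge> - L2" using Gb y that by auto
    qed
    have p: "x1 \<tau> > 0" "x2 \<tau> > 0" using before that by auto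
    have "ln (x1 \<tau>) \<ge> ln (x1 0 * exp (- L1 * s))"
      using m1 i1 L that mult_left_mono[of \<tau> s L1] by (simp add: ln_mult)
    hence 1: "x1 \<tau> \<ge> x1 0 * exp (- L1 * s)" using p i1 by simp
    have "ln (x2 \<tau>) \<ge> ln (x2 0 * exp (- L2 * s))"
      using m2 i2 L that mult_left_mono[of \<tau> s L2] by (simp add: ln_mult)
    hence 2: "x2 \<tau> \<ge> x2 0 * exp (- L2 * s)" using p i2 by simp
    show ?thesis using 1 2 by simp
  qed
  have lim: "x1 s \<ge> x1 0 * exp (- L1 * s) \<and> x2 s \<ge> x2 0 * exp (- L2 * s)"
  proof -
    have ev: "eventually (\<lambda>\<tau>. \<tau> \<in> {0<..<s}) (at_left s)"
      using eventually_at_left_real[OF sp] .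
    have t1: "(x1 \<longlongrightarrow> x1 s) (at_left s)"
      using DERIV_isCont[OF d1[OF sp]] by (simp add: isCont_def filterlim_at_split)
    have t2: "(x2 \<longlongrightarrow> x2 s) (at_left s)"
      using DERIV_isCont[OF d2[OF sp]] by (simp add: isCont_def filterlim_at_split)
    have "x1 s \<ge> x1 0 * exp (- L1 * s)"
      by (rule tendsto_lowerbound[OF t1 eventually_mono[OF ev]]) (use low in auto)
    moreover have "x2 s \<ge> x2 0 * exp (- L2 * s)"
      by (rule tendsto_lowerbound[OF t2 eventually_mono[OF ev]]) (use low in auto)
    ultimately show ?thesis by simp
  qed
  have "x1 s > 0" "x2 s > 0" using lim i1 i2
    by (meson exp_gt_zero less_le_trans mult_pos_pos)+
  thus False using sS unfolding s_def S_def by auto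
qed

end




lemma condH1:
  fixes r1 r2 K1 K2 a h e d x1 x2 \<delta> k :: real
  assumes pos: "r1 > 0" "r2 > 0" "K1 > 0" "K2 > 0" "a > 0" "h > 0" "e > 0" "d \<ge> r2"
    and x: "0 < x1" "x1 \<le> \<delta>" "0 < x2"
    and \<delta>: "\<delta> \<le> K1 / 4" "k * e * a * \<delta> \<le> a"
    and k: "k = 4 * a^2 * K2 / (r1 * r2)"
  shows "r1 * (1 - x1 / K1) - a * x2 / (1 + h * a * x1)
     - k * (x2 * (e * a * x1 / (1 + h * a * x1) - d + r2 * (1 - x2 / K2))) \<ge> r1 / 2"
proof -
  have den: "1 + h * a * x1 \<ge> 1" using pos x by simp
  have kp: "k > 0" using k pos by simp
  have A1: "a * x2 / (1 + h * a * x1) \<le> a * x2"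
    using divide_left_mono[of 1 "1 + h*a*x1" "a * x2"] den pos x by simp
  have A2: "e * a * x1 / (1 + h * a * x1) \<le> e * a * \<delta>"
  proof -
    have "e * a * x1 / (1 + h * a * x1) \<le> e * a * x1"
      using divide_left_mono[of 1 "1 + h*a*x1" "e * a * x1"] den pos x by simp
    also have "\<dots> \<le> e * a * \<delta>" using x pos by simp
    finally show ?thesis .
  qed
  have A3: "r1 * (1 - x1 / K1) \<ge> 3 * r1 / 4"
  proof -
    have "x1 / K1 \<le> 1/4" using x \<delta> pos by (simp add: divide_le_eq)
    hence "r1 * (x1 / K1) \<le> r1 * (1/4)" using pos by (intro mult_left_mono) auto
    thus ?thesis by (simp add: right_diff_distrib)
  qed
  have A4: "k * (x2 * (e * a * x1 / (1 + h * a * x1))) \<le> a * x2"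
  proof -
    have "k * (x2 * (e * a * x1 / (1 + h * a * x1))) \<le> k * (x2 * (e * a * \<delta>))"
      using A2 kp x by (intro mult_left_mono) auto
    also have "\<dots> = x2 * (k * e * a * \<delta>)" by (simp add: algebra_simps)
    also have "\<dots> \<le> x2 * a" using \<delta> x by (intro mult_left_mono) auto
    finally show ?thesis by (simp add: algebra_simps)
  qed
  have A5: "k * (x2 * (d - r2)) \<ge> 0" using kp x pos by simp
  have A6: "k * (x2 * (r2 * (x2 / K2))) = (4 * a^2 / r1) * x2^2"
    using pos unfolding k by (simp add: field_simps power2_eq_square)
  have A7: "(4 * a^2 / r1) * x2^2 - 2 * a * x2 + r1 / 4 \<ge> 0"
  proof -
    have "(4 * a^2 / r1) * x2^2 - 2 * a * x2 + r1 / 4 = (4 * a^2 / r1) * (x2 - r1 / (4 * a))^2"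
      using pos by (simp add: field_simps power2_eq_square)
    thus ?thesis using pos by simp
  qed
  have eq: "k * (x2 * (e * a * x1 / (1 + h * a * x1) - d + r2 * (1 - x2 / K2)))
     = k * (x2 * (e * a * x1 / (1 + h * a * x1))) - k * (x2 * (d - r2)) - k * (x2 * (r2 * (x2 / K2)))"
    by (simp add: algebra_simps)
  show ?thesis using A1 A3 A4 A5 A6 A7 unfolding eq by linarith
qed

lemma condH2:
  fixes r1 r2 K1 K2 a h e d x1 x2 \<delta> k g :: real
  assumes pos: "r1 > 0" "r2 > 0" "K1 > 0" "K2 > 0" "a > 0" "h > 0" "e > 0"
    and x: "0 < x1" "x1 \<le> \<delta>" "0 < x2"
    and k: "k = a * K2 / r2"
    and g: "g = r1 - a * K2 * (1 - d / r2)"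
    and \<delta>: "\<delta> * (r1 / K1 + k * e * a) \<le> g / 2"
  shows "r1 * (1 - x1 / K1) - a * x2 / (1 + h * a * x1)
     - k * (e * a * x1 / (1 + h * a * x1) - d + r2 * (1 - x2 / K2)) \<ge> g / 2"
proof -
  have den: "1 + h * a * x1 \<ge> 1" using pos x by simp
  have kp: "k > 0" using k pos by simp
  have A1: "a * x2 / (1 + h * a * x1) \<le> a * x2"
    using divide_left_mono[of 1 "1 + h*a*x1" "a * x2"] den pos x by simp
  have A2: "k * (e * a * x1 / (1 + h * a * x1)) \<le> k * e * a * \<delta>"
  proof -
    have "e * a * x1 / (1 + h * a * x1) \<le> e * a * x1"
      using divide_left_mono[of 1 "1 + h*a*x1" "e * a * x1"] den pos x by simp
    also have "\<dots> \<le> e * a * \<delta>" using x pos by simp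
    finally have "e * a * x1 / (1 + h * a * x1) \<le> e * a * \<delta>" .
    hence "k * (e * a * x1 / (1 + h * a * x1)) \<le> k * (e * a * \<delta>)" using kp by (intro mult_left_mono) auto
    thus ?thesis by (simp add: algebra_simps)
  qed
  have A3: "r1 * (x1 / K1) \<le> r1 * (\<delta> / K1)"
    using x pos by (intro mult_left_mono divide_right_mono) auto
  have A4: "k * (r2 * (x2 / K2)) = a * x2" using pos k by (simp add: field_simps)
  have A5: "k * (r2 - d) = a * K2 * (1 - d / r2)" using pos k by (simp add: field_simps)
  have eq: "r1 * (1 - x1 / K1) - a * x2 / (1 + h * a * x1)
     - k * (e * a * x1 / (1 + h * a * x1) - d + r2 * (1 - x2 / K2))
     = r1 - r1 * (x1 / K1) - a * x2 / (1 + h * a * x1) - k * (e * a * x1 / (1 + h * a * x1))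
       - k * (r2 - d) + k * (r2 * (x2 / K2))"
    by (simp add: algebra_simps)
  have A6: "\<delta> * (r1 / K1 + k * e * a) = r1 * (\<delta> / K1) + k * e * a * \<delta>" by (simp add: algebra_simps)
  show ?thesis unfolding eq using A1 A2 A3 A4 A5 A6 \<delta> g by linarith
qed

lemma condP2:
  fixes r1 r2 K1 K2 a h e d x1 x2 \<delta> c F \<sigma> \<eta> :: real
  assumes pos: "r1 > 0" "r2 > 0" "K1 > 0" "K2 > 0" "a > 0" "h > 0" "e > 0"
    and x: "0 < x1" "x1 \<le> K1 * (1 + \<eta>)" "0 < x2" "x2 \<le> \<delta>"
    and F: "F = e * a * K1 / (1 + a * h * K1)"
    and c: "c = F / r1"
    and \<sigma>: "\<sigma> = F + r2 - d" "F * \<eta> \<le> \<sigma> / 2" and \<eta>: "\<eta> \<ge> 0"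
    and \<delta>: "\<delta> * (r2 / K2 + c * a) \<le> \<sigma> / 4"
  shows "e * a * x1 / (1 + h * a * x1) - d + r2 * (1 - x2 / K2)
     + c * (r1 * (1 - x1 / K1) - a * x2 / (1 + h * a * x1)) \<ge> \<sigma> / 4"
proof -
  have den: "1 + h * a * x1 \<ge> 1" using pos x by simp
  have Fp: "F > 0" using F pos by (simp add: add_pos_pos)
  have cp: "c > 0" using c Fp pos by simp
  have cr: "c * r1 = F" using c pos by simp
  have B1: "e * a * x1 / (1 + h * a * x1) + F * (1 - x1 / K1) \<ge> F - F * \<eta>"
  proof (cases "x1 \<le> K1")
    case True
    have "e * a * x1 / (1 + h * a * x1) \<ge> F * (x1 / K1)"
    proof -
      have "F * (x1 / K1) = e * a * x1 / (1 + a * h * K1)" using F pos by (simp add: field_simps)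
      also have "\<dots> \<le> e * a * x1 / (1 + h * a * x1)"
      proof (rule divide_left_mono)
        show "1 + h * a * x1 \<le> 1 + a * h * K1" using True pos by (simp add: mult_left_mono mult.commute mult.left_commute)
        show "0 \<le> e * a * x1" using pos x by simp
        have "1 + a * h * K1 > 0" using pos by (simp add: add_pos_pos)
        thus "0 < (1 + a * h * K1) * (1 + h * a * x1)" using den by simp
      qed
      finally show ?thesis .
    qed
    moreover have "F * \<eta> \<ge> 0" using Fp \<eta> by simp
    ultimately show ?thesis by (simp add: algebra_simps)
  next
    case False
    have "e * a * x1 / (1 + h * a * x1) \<ge> F"
    proof -
      have "e * a * x1 * (1 + a * h * K1) \<ge> e * a * K1 * (1 + h * a * x1)"
      proof -
        have "e * a * x1 * (1 + a * h * K1) - e * a * K1 * (1 + h * a * x1) = e * a * (x1 - K1)"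
          by (simp add: algebra_simps)
        moreover have "e * a * (x1 - K1) \<ge> 0" using False pos by simp
        ultimately show ?thesis by linarith
      qed
      hence "e * a * K1 * (1 + h * a * x1) / (1 + a * h * K1) \<le> e * a * x1"
        using pos by (subst pos_divide_le_eq) (auto simp: add_pos_pos)
      hence "F * (1 + h * a * x1) \<le> e * a * x1" unfolding F by simp
      thus ?thesis using den by (subst pos_le_divide_eq) auto
    qed
    moreover have "F * (1 - x1 / K1) \<ge> - (F * \<eta>)"
    proof -
      have "x1 / K1 \<le> 1 + \<eta>" using x pos by (simp add: divide_le_eq mult.commute)
      hence "F * (x1 / K1) \<le> F * (1 + \<eta>)" using Fp by (intro mult_left_mono) auto
      thus ?thesis by (simp add: algebra_simps)
    qed
    ultimately show ?thesis by linarith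
  qed
  have A1: "c * (a * x2 / (1 + h * a * x1)) \<le> c * a * x2"
  proof -
    have "a * x2 / (1 + h * a * x1) \<le> a * x2"
      using divide_left_mono[of 1 "1 + h*a*x1" "a * x2"] den pos x by simp
    hence "c * (a * x2 / (1 + h * a * x1)) \<le> c * (a * x2)" using cp by (intro mult_left_mono) auto
    thus ?thesis by (simp add: mult.assoc)
  qed
  have A2: "x2 * (r2 / K2 + c * a) \<le> \<delta> * (r2 / K2 + c * a)"
    using x pos cp by (intro mult_right_mono) auto
  have eq: "e * a * x1 / (1 + h * a * x1) - d + r2 * (1 - x2 / K2)
     + c * (r1 * (1 - x1 / K1) - a * x2 / (1 + h * a * x1))
     = (e * a * x1 / (1 + h * a * x1) + (c * r1) * (1 - x1 / K1)) - d + r2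
       - x2 * (r2 / K2) - c * (a * x2 / (1 + h * a * x1))"
    by (simp add: algebra_simps)
  have A3: "x2 * (r2 / K2 + c * a) = x2 * (r2 / K2) + c * a * x2" by (simp add: algebra_simps)
  show ?thesis unfolding eq cr using B1 A1 A2 A3 \<sigma> \<delta> by linarith
qed




definition "M2c r2 K2 e h = K2 * (r2 + e / h + 1) / r2"
definition "kH1c r1 r2 K2 a = 4 * a^2 * K2 / (r1 * r2)"
definition "dH1c r1 r2 K1 K2 a e = min (K1 / 4) (1 / (kH1c r1 r2 K2 a * e))"
definition "m1c r1 r2 K1 K2 a h e = dH1c r1 r2 K1 K2 a e * exp (- (kH1c r1 r2 K2 a * M2c r2 K2 e h))"

context hp begin

lemma pos1: "t \<ge> 0 \<Longrightarrow> x1 t > 0" using positive by auto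
lemma pos2: "t \<ge> 0 \<Longrightarrow> x2 t > 0" using positive by auto

lemma dl1: "t > 0 \<Longrightarrow> ((\<lambda>t. ln (x1 t)) has_real_derivative G1 t) (at t)"
  using d1[of t] pos1[of t] by (auto intro!: derivative_eq_intros)
lemma dl2: "t > 0 \<Longrightarrow> ((\<lambda>t. ln (x2 t)) has_real_derivative G2 t) (at t)"
  using d2[of t] pos2[of t] by (auto intro!: derivative_eq_intros)

lemma cl1: "T \<ge> 0 \<Longrightarrow> continuous_on {T..} (\<lambda>t. ln (x1 t))"
  using pos1 by (intro continuous_intros continuous_on_subset[OF c1]) (auto, metis less_irrefl order_trans)
lemma cl2: "T \<ge> 0 \<Longrightarrow> continuous_on {T..} (\<lambda>t. ln (x2 t))"
  using pos2 by (intro continuous_intros continuous_on_subset[OF c2]) (auto, metis less_irrefl order_trans)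
lemma cx2: "T \<ge> 0 \<Longrightarrow> continuous_on {T..} x2"
  by (rule continuous_on_subset[OF c2]) auto

lemma up1:
  assumes \<eta>: "\<eta> > 0"
  shows "\<exists>T. \<forall>t\<ge>T. x1 t \<le> K1 * (1 + \<eta>)"
proof -
  have "\<exists>T'. \<forall>t\<ge>T'. - ln (K1 * (1 + \<eta>)) - (0 - 0) \<le> - ln (x1 t)"
  proof (rule excursion[where T=0 and y="\<lambda>t. - ln (x1 t)" and V="\<lambda>t. - ln (x1 t)"
      and W="\<lambda>_. 0" and D="\<lambda>t. - G1 t" and g="r1 * \<eta>"])
    show "continuous_on {0..} (\<lambda>t. - ln (x1 t))" using cl1[of 0] by (auto intro: continuous_intros)
    thus "continuous_on {0..} (\<lambda>t. - ln (x1 t))" .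
    show "((\<lambda>t. - ln (x1 t)) has_real_derivative - G1 t) (at t)" if "t > 0" for t
      using DERIV_minus[OF dl1[OF that]] .
    show "r1 * \<eta> > 0" using r1 \<eta> by simp
    show "r1 * \<eta> \<le> - G1 t" if t: "t > 0" "- ln (x1 t) \<le> - ln (K1 * (1 + \<eta>))" for t
    proof -
      have xp: "x1 t > 0" "x2 t > 0" using pos1 pos2 t by auto
      have "ln (K1 * (1 + \<eta>)) \<le> ln (x1 t)" using t by simp
      hence big: "K1 * (1 + \<eta>) \<le> x1 t" using xp K1 \<eta> by simp
      have "x1 t / K1 \<ge> 1 + \<eta>" using big K1 by (simp add: le_divide_eq mult.commute)
      hence "r1 * (x1 t / K1) \<ge> r1 * (1 + \<eta>)" using r1 by (intro mult_left_mono) auto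
      moreover have "a * x2 t / (1 + h * a * x1 t) \<ge> 0" using a h xp by simp
      ultimately show ?thesis unfolding G1_def by (simp add: algebra_simps)
    qed
  qed auto
  then obtain T' where T': "\<forall>t\<ge>T'. - ln (K1 * (1 + \<eta>)) \<le> - ln (x1 t)" by auto
  show ?thesis
  proof (intro exI[of _ "max T' 0"] allI impI)
    fix t assume "max T' 0 \<le> t"
    hence "ln (x1 t) \<le> ln (K1 * (1 + \<eta>))" "x1 t > 0" using T' pos1 by auto
    thus "x1 t \<le> K1 * (1 + \<eta>)" using K1 \<eta> by simp
  qed
qed

lemma up2: "\<exists>T. \<forall>t\<ge>T. x2 t \<le> M2c r2 K2 e h"
proof -
  define M where "M = M2c r2 K2 e h"
  have Mp: "M > 0" unfolding M_def M2c_def using r2 K2 e h by (simp add: add_pos_pos)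
  have "\<exists>T'. \<forall>t\<ge>T'. - ln M - (0 - 0) \<le> - ln (x2 t)"
  proof (rule excursion[where T=0 and y="\<lambda>t. - ln (x2 t)" and V="\<lambda>t. - ln (x2 t)"
      and W="\<lambda>_. 0" and D="\<lambda>t. - G2 t" and g="1"])
    show "continuous_on {0..} (\<lambda>t. - ln (x2 t))" using cl2[of 0] by (auto intro: continuous_intros)
    thus "continuous_on {0..} (\<lambda>t. - ln (x2 t))" .
    show "((\<lambda>t. - ln (x2 t)) has_real_derivative - G2 t) (at t)" if "t > 0" for t
      using DERIV_minus[OF dl2[OF that]] .
    show "1 \<le> - G2 t" if t: "t > 0" "- ln (x2 t) \<le> - ln M" for t
    proof -
      have xp: "x1 t > 0" "x2 t > 0" using pos1 pos2 t by auto
      have "ln M \<le> ln (x2 t)" using t by simp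
      hence big: "M \<le> x2 t" using xp Mp by simp
      have "r2 * (x2 t / K2) \<ge> r2 * (M / K2)" using big r2 K2 by (intro mult_left_mono divide_right_mono) auto
      moreover have "r2 * (M / K2) = r2 + e / h + 1" unfolding M_def M2c_def using r2 K2 by simp
      moreover have "e * a * x1 t / (1 + h * a * x1 t) \<le> e / h"
      proof -
        have "e * a * x1 t \<le> e / h * (1 + h * a * x1 t)" using h e by (simp add: algebra_simps)
        thus ?thesis using xp h a by (subst pos_divide_le_eq) (auto simp: add_pos_pos)
      qed
      ultimately show ?thesis unfolding G2_def using d by (simp add: algebra_simps)
    qed
  qed auto
  then obtain T' where T': "\<forall>t\<ge>T'. - ln M \<le> - ln (x2 t)" by auto
  show ?thesis unfolding M_def[symmetric]
  proof (intro exI[of _ "max T' 0"] allI impI)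
    fix t assume "max T' 0 \<le> t"
    hence "ln (x2 t) \<le> ln M" "x2 t > 0" using T' pos2 by auto
    thus "x2 t \<le> M" using Mp by simp
  qed
qed

lemma lowP1:
  assumes dr: "d < r2"
  shows "\<exists>T. \<forall>t\<ge>T. x2 t \<ge> K2 * (1 - d / r2) / 2"
proof -
  define m where "m = K2 * (1 - d / r2) / 2"
  have mp: "m > 0" unfolding m_def using dr r2 K2 by simp
  have "\<exists>T'. \<forall>t\<ge>T'. ln m - (0 - 0) \<le> ln (x2 t)"
  proof (rule excursion[where T=0 and y="\<lambda>t. ln (x2 t)" and V="\<lambda>t. ln (x2 t)"
      and W="\<lambda>_. 0" and D="\<lambda>t. G2 t" and g="(r2 - d) / 2"])
    show "continuous_on {0..} (\<lambda>t. ln (x2 t))" using cl2[of 0] by auto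
    thus "continuous_on {0..} (\<lambda>t. ln (x2 t))" .
    show "((\<lambda>t. ln (x2 t)) has_real_derivative G2 t) (at t)" if "t > 0" for t
      using dl2[OF that] .
    show "(r2 - d) / 2 > 0" using dr by simp
    show "(r2 - d) / 2 \<le> G2 t" if t: "t > 0" "ln (x2 t) \<le> ln m" for t
    proof -
      have xp: "x1 t > 0" "x2 t > 0" using pos1 pos2 t by auto
      hence small: "x2 t \<le> m" using t mp by simp
      have "r2 * (x2 t / K2) \<le> r2 * (m / K2)" using small r2 K2 by (intro mult_left_mono divide_right_mono) auto
      moreover have "r2 * (m / K2) = (r2 - d) / 2" unfolding m_def using r2 K2 by (simp add: field_simps)
      moreover have "e * a * x1 t / (1 + h * a * x1 t) \<ge> 0" using xp h a e by simp
      moreover have "G2 t = e * a * x1 t / (1 + h * a * x1 t) - d + r2 - r2 * (x2 t / K2)"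
        unfolding G2_def by (simp add: algebra_simps)
      ultimately show ?thesis by argo
    qed
  qed auto
  then obtain T' where T': "\<forall>t\<ge>T'. ln m \<le> ln (x2 t)" by auto
  show ?thesis unfolding m_def[symmetric]
  proof (intro exI[of _ "max T' 0"] allI impI)
    fix t assume "max T' 0 \<le> t"
    hence "ln m \<le> ln (x2 t)" "x2 t > 0" using T' pos2 by auto
    thus "m \<le> x2 t" using mp by simp
  qed
qed

end




definition "kH2c r2 K2 a = a * K2 / r2"
definition "gH2c r1 r2 K2 a d = r1 - a * K2 * (1 - d / r2)"
definition "dH2c r1 r2 K1 K2 a e d = gH2c r1 r2 K2 a d / (2 * (r1 / K1 + kH2c r2 K2 a * e * a))"
definition "m2c r2 K2 d = K2 * (1 - d / r2) / 2"
definition "m1bc r1 r2 K1 K2 a h e d = dH2c r1 r2 K1 K2 a e d *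
   exp (- (kH2c r2 K2 a * (ln (M2c r2 K2 e h) - ln (m2c r2 K2 d))))"
definition "Fc K1 a h e = e * a * K1 / (1 + a * h * K1)"
definition "sc r2 K1 a h e d = Fc K1 a h e + r2 - d"
definition "ec r2 K1 a h e d = sc r2 K1 a h e d / (2 * Fc K1 a h e)"
definition "cc r1 K1 a h e = Fc K1 a h e / r1"
definition "d2c r1 r2 K1 K2 a h e d = sc r2 K1 a h e d / (4 * (r2 / K2 + cc r1 K1 a h e * a))"
definition "m2bc r1 r2 K1 K2 a h e d = d2c r1 r2 K1 K2 a h e d *
   exp (- (cc r1 K1 a h e * (ln (K1 * (1 + ec r2 K1 a h e d)) - ln (m1c r1 r2 K1 K2 a h e))))"

lemma divmul_aux: "(S::real) > 0 \<Longrightarrow> (g / (n * S)) * S \<le> g / n"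
  by simp

context hp begin

lemma m1c_pos: "m1c r1 r2 K1 K2 a h e > 0"
  unfolding m1c_def dH1c_def kH1c_def using r1 r2 K1 K2 a e by simp

lemma lowH1:
  assumes dr: "d \<ge> r2"
  shows "\<exists>T. \<forall>t\<ge>T. x1 t \<ge> m1c r1 r2 K1 K2 a h e"
proof -
  define k where "k = kH1c r1 r2 K2 a"
  define \<delta> where "\<delta> = dH1c r1 r2 K1 K2 a e"
  define M where "M = M2c r2 K2 e h"
  have kp: "k > 0" unfolding k_def kH1c_def using r1 r2 K2 a by simp
  have \<delta>p: "\<delta> > 0" "\<delta> \<le> K1 / 4" "\<delta> \<le> 1 / (k * e)"
    unfolding \<delta>_def dH1c_def k_def[symmetric] using K1 kp e by auto
  have ked: "k * e * a * \<delta> \<le> a"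
  proof -
    have "k * e * \<delta> \<le> k * e * (1 / (k * e))" using \<delta>p kp e by (intro mult_left_mono) auto
    also have "\<dots> = 1" using kp e by simp
    finally have "k * e * \<delta> \<le> 1" .
    hence "a * (k * e * \<delta>) \<le> a * 1" using a by (intro mult_left_mono) auto
    thus ?thesis by (simp add: algebra_simps)
  qed
  obtain T0 where T0: "\<forall>t\<ge>T0. x2 t \<le> M" using up2 unfolding M_def by auto
  define T where "T = max T0 1"
  have T: "T \<ge> 0" "T \<ge> T0" unfolding T_def by auto
  have "\<exists>T'. \<forall>t\<ge>T'. ln \<delta> - (0 - (- k * M)) \<le> ln (x1 t)"
  proof (rule excursion[where T=T and y="\<lambda>t. ln (x1 t)" and V="\<lambda>t. ln (x1 t) - k * x2 t"
      and W="\<lambda>t. - k * x2 t" and D="\<lambda>t. G1 t - k * (x2 t * G2 t)" and g="r1 / 2"])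
    show "continuous_on {T..} (\<lambda>t. ln (x1 t))" using cl1 T by auto
    show "continuous_on {T..} (\<lambda>t. ln (x1 t) - k * x2 t)"
      by (intro continuous_on_diff cl1 continuous_on_mult continuous_on_const cx2 T(1))
    show "((\<lambda>t. ln (x1 t) - k * x2 t) has_real_derivative G1 t - k * (x2 t * G2 t)) (at t)"
      if "t > T" for t
      using T that by (intro DERIV_diff dl1 DERIV_cmult d2) auto
    show "r1 / 2 > 0" using r1 by simp
    show "r1 / 2 \<le> G1 t - k * (x2 t * G2 t)" if t: "t > T" "ln (x1 t) \<le> ln \<delta>" for t
    proof -
      have xp: "x1 t > 0" "x2 t > 0" using pos1 pos2 t T by auto
      hence "x1 t \<le> \<delta>" using t \<delta>p by simp
      thus ?thesis unfolding G1_def G2_def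
        by (intro condH1[OF r1 r2 K1 K2 a h e dr xp(1) _ xp(2) \<delta>p(2) ked k_def[unfolded kH1c_def]])
    qed
    show "- k * M \<le> - k * x2 t \<and> - k * x2 t \<le> 0" if "t \<ge> T" for t
      using T0 T that kp pos2[of t] by auto
  qed auto
  then obtain T' where T': "\<forall>t\<ge>T'. ln \<delta> - k * M \<le> ln (x1 t)" by auto
  show ?thesis
  proof (intro exI[of _ "max T' 0"] allI impI)
    fix t assume "max T' 0 \<le> t"
    hence l: "ln \<delta> - k * M \<le> ln (x1 t)" "x1 t > 0" using T' pos1 by auto
    have "m1c r1 r2 K1 K2 a h e = exp (ln \<delta> - k * M)"
      unfolding m1c_def \<delta>_def[symmetric] k_def[symmetric] M_def[symmetric] using \<delta>p
      by (simp add: exp_diff exp_minus exp_add field_simps)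
    also have "\<dots> \<le> exp (ln (x1 t))" by (rule exp_le_cancel_iff[THEN iffD2, OF l(1)])
    also have "\<dots> = x1 t" using l by simp
    finally show "m1c r1 r2 K1 K2 a h e \<le> x1 t" .
  qed
qed

lemma lowH2:
  assumes dr: "d < r2" and cnd: "r1 > a * K2 * (1 - d / r2)"
  shows "\<exists>T. \<forall>t\<ge>T. x1 t \<ge> m1bc r1 r2 K1 K2 a h e d"
proof -
  define k where "k = kH2c r2 K2 a"
  define g where "g = gH2c r1 r2 K2 a d"
  define \<delta> where "\<delta> = dH2c r1 r2 K1 K2 a e d"
  define M where "M = M2c r2 K2 e h"
  define m where "m = m2c r2 K2 d"
  have kp: "k > 0" unfolding k_def kH2c_def using r2 K2 a by simp
  have gp: "g > 0" unfolding g_def gH2c_def using cnd by simp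
  have Sp: "r1 / K1 + k * e * a > 0" using r1 K1 kp e a by (simp add: add_pos_pos)
  have \<delta>p: "\<delta> > 0" unfolding \<delta>_def dH2c_def g_def[symmetric] k_def[symmetric] using gp Sp by simp
  have \<delta>e: "\<delta> * (r1 / K1 + k * e * a) \<le> g / 2"
    unfolding \<delta>_def dH2c_def g_def[symmetric] k_def[symmetric] by (rule divmul_aux[OF Sp])
  have mp: "m > 0" unfolding m_def m2c_def using dr r2 K2 by simp
  obtain T0 where T0: "\<forall>t\<ge>T0. x2 t \<le> M" using up2 unfolding M_def by auto
  obtain T1 where T1: "\<forall>t\<ge>T1. x2 t \<ge> m" using lowP1[OF dr] unfolding m_def m2c_def by auto
  define T where "T = max (max T0 T1) 1"
  have T: "T \<ge> 0" "T \<ge> T0" "T \<ge> T1" unfolding T_def by auto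
  have "\<exists>T'. \<forall>t\<ge>T'. ln \<delta> - (- k * ln m - (- k * ln M)) \<le> ln (x1 t)"
  proof (rule excursion[where T=T and y="\<lambda>t. ln (x1 t)" and V="\<lambda>t. ln (x1 t) - k * ln (x2 t)"
      and W="\<lambda>t. - k * ln (x2 t)" and D="\<lambda>t. G1 t - k * G2 t" and g="g / 2"])
    show "continuous_on {T..} (\<lambda>t. ln (x1 t))" using cl1 T by auto
    show "continuous_on {T..} (\<lambda>t. ln (x1 t) - k * ln (x2 t))"
      by (intro continuous_on_diff cl1 continuous_on_mult continuous_on_const cl2 T(1))
    show "((\<lambda>t. ln (x1 t) - k * ln (x2 t)) has_real_derivative G1 t - k * G2 t) (at t)"
      if "t > T" for t
      using T that by (intro DERIV_diff dl1 DERIV_cmult dl2) auto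
    show "g / 2 > 0" using gp by simp
    show "g / 2 \<le> G1 t - k * G2 t" if t: "t > T" "ln (x1 t) \<le> ln \<delta>" for t
    proof -
      have xp: "x1 t > 0" "x2 t > 0" using pos1 pos2 t T by auto
      hence "x1 t \<le> \<delta>" using t \<delta>p by simp
      thus ?thesis unfolding G1_def G2_def
        by (intro condH2[OF r1 r2 K1 K2 a h e xp(1) _ xp(2) k_def[unfolded kH2c_def]
              g_def[unfolded gH2c_def] \<delta>e])
    qed
    show "- k * ln M \<le> - k * ln (x2 t) \<and> - k * ln (x2 t) \<le> - k * ln m" if "t \<ge> T" for t
    proof -
      have "x2 t \<le> M" "x2 t \<ge> m" "x2 t > 0" using T0 T1 T that pos2[of t] by auto
      hence "ln (x2 t) \<le> ln M" "ln m \<le> ln (x2 t)" using mp by auto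
      thus ?thesis using kp by (auto intro: mult_left_mono)
    qed
  qed auto
  then obtain T' where T': "\<forall>t\<ge>T'. ln \<delta> - k * (ln M - ln m) \<le> ln (x1 t)"
    by (auto simp: algebra_simps)
  show ?thesis
  proof (intro exI[of _ "max T' 0"] allI impI)
    fix t assume "max T' 0 \<le> t"
    hence l: "ln \<delta> - k * (ln M - ln m) \<le> ln (x1 t)" "x1 t > 0" using T' pos1 by auto
    have "m1bc r1 r2 K1 K2 a h e d = exp (ln \<delta> - k * (ln M - ln m))"
      unfolding m1bc_def \<delta>_def[symmetric] k_def[symmetric] M_def[symmetric] m_def[symmetric] using \<delta>p
      by (simp add: exp_diff exp_minus exp_add field_simps)
    also have "\<dots> \<le> exp (ln (x1 t))" by (rule exp_le_cancel_iff[THEN iffD2, OF l(1)])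
    also have "\<dots> = x1 t" using l by simp
    finally show "m1bc r1 r2 K1 K2 a h e d \<le> x1 t" .
  qed
qed

lemma lowP2:
  assumes dr: "d \<ge> r2" and cnd: "r2 + e * a * K1 / (1 + a * h * K1) > d"
  shows "\<exists>T. \<forall>t\<ge>T. x2 t \<ge> m2bc r1 r2 K1 K2 a h e d"
proof -
  define F where "F = Fc K1 a h e"
  define \<sigma> where "\<sigma> = sc r2 K1 a h e d"
  define \<eta> where "\<eta> = ec r2 K1 a h e d"
  define c where "c = cc r1 K1 a h e"
  define \<delta> where "\<delta> = d2c r1 r2 K1 K2 a h e d"
  define m1 where "m1 = m1c r1 r2 K1 K2 a h e"
  have Fp: "F > 0" unfolding F_def Fc_def using K1 a h e by (simp add: add_pos_pos)
  have \<sigma>p: "\<sigma> > 0" unfolding \<sigma>_def sc_def Fc_def using cnd by simp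
  have \<sigma>F: "\<sigma> = F + r2 - d" unfolding \<sigma>_def sc_def F_def by simp
  have cp: "c > 0" and cF: "c = F / r1" unfolding c_def cc_def F_def[symmetric] using Fp r1 by auto
  have \<eta>p: "\<eta> > 0" and \<eta>e: "F * \<eta> \<le> \<sigma> / 2"
    unfolding \<eta>_def ec_def F_def[symmetric] \<sigma>_def[symmetric] using Fp \<sigma>p by auto
  have Sp: "r2 / K2 + c * a > 0" using r2 K2 cp a by (simp add: add_pos_pos)
  have \<delta>p: "\<delta> > 0" unfolding \<delta>_def d2c_def \<sigma>_def[symmetric] c_def[symmetric] using \<sigma>p Sp by simp
  have \<delta>e: "\<delta> * (r2 / K2 + c * a) \<le> \<sigma> / 4"
    unfolding \<delta>_def d2c_def \<sigma>_def[symmetric] c_def[symmetric] by (rule divmul_aux[OF Sp])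
  have m1p: "m1 > 0" unfolding m1_def using m1c_pos .
  obtain T0 where T0: "\<forall>t\<ge>T0. x1 t \<le> K1 * (1 + \<eta>)" using up1[OF \<eta>p] by auto
  obtain T1 where T1: "\<forall>t\<ge>T1. x1 t \<ge> m1" using lowH1[OF dr] unfolding m1_def by auto
  define T where "T = max (max T0 T1) 1"
  have T: "T \<ge> 0" "T \<ge> T0" "T \<ge> T1" unfolding T_def by auto
  have "\<exists>T'. \<forall>t\<ge>T'. ln \<delta> - (c * ln (K1 * (1 + \<eta>)) - c * ln m1) \<le> ln (x2 t)"
  proof (rule excursion[where T=T and y="\<lambda>t. ln (x2 t)" and V="\<lambda>t. ln (x2 t) + c * ln (x1 t)"
      and W="\<lambda>t. c * ln (x1 t)" and D="\<lambda>t. G2 t + c * G1 t" and g="\<sigma> / 4"])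
    show "continuous_on {T..} (\<lambda>t. ln (x2 t))" using cl2 T by auto
    show "continuous_on {T..} (\<lambda>t. ln (x2 t) + c * ln (x1 t))"
      by (intro continuous_on_add cl2 continuous_on_mult continuous_on_const cl1 T(1))
    show "((\<lambda>t. ln (x2 t) + c * ln (x1 t)) has_real_derivative G2 t + c * G1 t) (at t)"
      if "t > T" for t
      using T that by (intro DERIV_add dl2 DERIV_cmult dl1) auto
    show "\<sigma> / 4 > 0" using \<sigma>p by simp
    show "\<sigma> / 4 \<le> G2 t + c * G1 t" if t: "t > T" "ln (x2 t) \<le> ln \<delta>" for t
    proof -
      have xp: "x1 t > 0" "x2 t > 0" using pos1 pos2 t T by auto
      hence "x2 t \<le> \<delta>" using t \<delta>p by simp
      moreover have "x1 t \<le> K1 * (1 + \<eta>)" using T0 T t by auto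
      ultimately show ?thesis unfolding G1_def G2_def
        by (intro condP2[OF r1 r2 K1 K2 a h e xp(1) _ xp(2) _ F_def[unfolded Fc_def] cF
              \<sigma>F \<eta>e less_imp_le[OF \<eta>p] \<delta>e])
    qed
    show "c * ln m1 \<le> c * ln (x1 t) \<and> c * ln (x1 t) \<le> c * ln (K1 * (1 + \<eta>))" if "t \<ge> T" for t
    proof -
      have "x1 t \<le> K1 * (1 + \<eta>)" "x1 t \<ge> m1" "x1 t > 0" using T0 T1 T that pos1[of t] by auto
      hence "ln (x1 t) \<le> ln (K1 * (1 + \<eta>))" "ln m1 \<le> ln (x1 t)" using m1p by auto
      thus ?thesis using cp by (auto intro: mult_left_mono)
    qed
  qed auto
  then obtain T' where T': "\<forall>t\<ge>T'. ln \<delta> - c * (ln (K1 * (1 + \<eta>)) - ln m1) \<le> ln (x2 t)"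
    by (auto simp: algebra_simps)
  show ?thesis
  proof (intro exI[of _ "max T' 0"] allI impI)
    fix t assume "max T' 0 \<le> t"
    hence l: "ln \<delta> - c * (ln (K1 * (1 + \<eta>)) - ln m1) \<le> ln (x2 t)" "x2 t > 0" using T' pos2 by auto
    have "m2bc r1 r2 K1 K2 a h e d = exp (ln \<delta> - c * (ln (K1 * (1 + \<eta>)) - ln m1))"
      unfolding m2bc_def \<delta>_def[symmetric] c_def[symmetric] \<eta>_def[symmetric] m1_def[symmetric] using \<delta>p
      by (simp add: exp_diff exp_minus exp_add field_simps)
    also have "\<dots> \<le> exp (ln (x2 t))" by (rule exp_le_cancel_iff[THEN iffD2, OF l(1)])
    also have "\<dots> = x2 t" using l by simp
    finally show "m2bc r1 r2 K1 K2 a h e d \<le> x2 t" .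
  qed
qed

end




lemma persist_from:
  assumes "\<epsilon> > 0"
    and "\<And>x1 x2. sol x1 x2 \<Longrightarrow> x1 0 > 0 \<Longrightarrow> x2 0 > 0 \<Longrightarrow> \<exists>T. \<forall>t\<ge>T. species i x1 x2 t \<ge> \<epsilon>"
  shows "persistent sol i"
  unfolding persistent_def
proof (intro exI[of _ \<epsilon>] conjI allI impI)
  show "\<epsilon> > 0" by fact
  fix x1 x2 assume "sol x1 x2 \<and> 0 < x1 0 \<and> 0 < x2 0"
  then obtain T where "\<forall>t\<ge>T. species i x1 x2 t \<ge> \<epsilon>" using assms(2) by blast
  hence "eventually (\<lambda>t. ereal \<epsilon> \<le> ereal (species i x1 x2 t)) at_top"
    by (auto simp: eventually_at_top_linorder)
  thus "ereal \<epsilon> \<le> Liminf at_top (\<lambda>t. ereal (species i x1 x2 t))"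
    by (rule Liminf_bounded)
qed

theorem theorem1:
  fixes r1 r2 K1 K2 a h e d :: real
  assumes "r1 > 0" "r2 > 0" "K1 > 0" "K2 > 0" "a > 0" "h > 0" "e > 0" "d \<ge> 0"
  defines "sol \<equiv> hp_solution r1 r2 K1 K2 a h e d"
  shows "(d > r2 \<or> (r1 / a > K2 * (1 - d / r2) \<and> K2 * (1 - d / r2) > 0)
            \<longrightarrow> persistent sol 1)
       \<and> (r2 + e * a * K1 / (1 + a * h * K1) > d \<longrightarrow> persistent sol 2)
       \<and> ((r2 + e * a * K1 / (1 + a * h * K1) > d \<and> d > r2) \<or>
            (r1 / a > K2 * (1 - d / r2) \<and> K2 * (1 - d / r2) > 0)
            \<longrightarrow> permanent sol)"
proof -
  note P = assms(1-8)
  have HP: "hp r1 r2 K1 K2 a h e d x1 x2" if "sol x1 x2" "x1 0 > 0" "x2 0 > 0" for x1 x2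
    using that P unfolding sol_def by unfold_locales auto
  have I: "persistent sol 1" if c: "d > r2 \<or> (r1 / a > K2 * (1 - d / r2) \<and> K2 * (1 - d / r2) > 0)"
  proof (cases "d \<ge> r2")
    case True
    show ?thesis
    proof (rule persist_from[where \<epsilon>="m1c r1 r2 K1 K2 a h e"])
      show "m1c r1 r2 K1 K2 a h e > 0" unfolding m1c_def dH1c_def kH1c_def using P by simp
      fix x1 x2 assume "sol x1 x2" "x1 0 > 0" "x2 0 > 0"
      thus "\<exists>T. \<forall>t\<ge>T. species 1 x1 x2 t \<ge> m1c r1 r2 K1 K2 a h e"
        using hp.lowH1[OF HP True] unfolding species_def by simp
    qed
  next
    case False
    hence dr: "d < r2" by simp
    have cnd: "r1 > a * K2 * (1 - d / r2)" using c False P by (auto simp: field_simps)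
    have gp: "gH2c r1 r2 K2 a d > 0" unfolding gH2c_def using cnd by simp
    have Sp: "r1 / K1 + kH2c r2 K2 a * e * a > 0" unfolding kH2c_def using P by (simp add: add_pos_pos)
    show ?thesis
    proof (rule persist_from[where \<epsilon>="m1bc r1 r2 K1 K2 a h e d"])
      show "m1bc r1 r2 K1 K2 a h e d > 0" unfolding m1bc_def dH2c_def using gp Sp by simp
      fix x1 x2 assume "sol x1 x2" "x1 0 > 0" "x2 0 > 0"
      thus "\<exists>T. \<forall>t\<ge>T. species 1 x1 x2 t \<ge> m1bc r1 r2 K1 K2 a h e d"
        using hp.lowH2[OF HP dr cnd] unfolding species_def by simp
    qed
  qed
  have II: "persistent sol 2" if c: "r2 + e * a * K1 / (1 + a * h * K1) > d"
  proof (cases "d \<ge> r2")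
    case True
    have Fp: "Fc K1 a h e > 0" unfolding Fc_def using P by (simp add: add_pos_pos)
    have \<sigma>p: "sc r2 K1 a h e d > 0" unfolding sc_def Fc_def using c by simp
    have cp: "cc r1 K1 a h e > 0" unfolding cc_def using Fp P by simp
    have Sp: "r2 / K2 + cc r1 K1 a h e * a > 0" using P cp by (simp add: add_pos_pos)
    show ?thesis
    proof (rule persist_from[where \<epsilon>="m2bc r1 r2 K1 K2 a h e d"])
      show "m2bc r1 r2 K1 K2 a h e d > 0" unfolding m2bc_def d2c_def using \<sigma>p Sp by simp
      fix x1 x2 assume "sol x1 x2" "x1 0 > 0" "x2 0 > 0"
      thus "\<exists>T. \<forall>t\<ge>T. species 2 x1 x2 t \<ge> m2bc r1 r2 K1 K2 a h e d"
        using hp.lowP2[OF HP True c] unfolding species_def by simp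
    qed
  next
    case False
    hence dr: "d < r2" by simp
    show ?thesis
    proof (rule persist_from[where \<epsilon>="K2 * (1 - d / r2) / 2"])
      show "K2 * (1 - d / r2) / 2 > 0" using dr P by simp
      fix x1 x2 assume "sol x1 x2" "x1 0 > 0" "x2 0 > 0"
      thus "\<exists>T. \<forall>t\<ge>T. species 2 x1 x2 t \<ge> K2 * (1 - d / r2) / 2"
        using hp.lowP1[OF HP dr] unfolding species_def by simp
    qed
  qed
  have Fp: "e * a * K1 / (1 + a * h * K1) > 0" using P by (simp add: add_pos_pos)
  show ?thesis
  proof (intro conjI impI)
    show "persistent sol 1" if "d > r2 \<or> (r1 / a > K2 * (1 - d / r2) \<and> K2 * (1 - d / r2) > 0)"
      using I that .
    show "persistent sol 2" if "r2 + e * a * K1 / (1 + a * h * K1) > d" using II that .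
    assume c: "(r2 + e * a * K1 / (1 + a * h * K1) > d \<and> d > r2) \<or>
            (r1 / a > K2 * (1 - d / r2) \<and> K2 * (1 - d / r2) > 0)"
    have 1: "persistent sol 1" using c by (intro I) auto
    have "r2 + e * a * K1 / (1 + a * h * K1) > d"
    proof (cases "d > r2")
      case True
      have "\<not> K2 * (1 - d / r2) > 0"
      proof
        assume "K2 * (1 - d / r2) > 0"
        hence "1 - d / r2 > 0" using P by (simp add: zero_less_mult_iff)
        hence "d < r2" using P by (simp add: field_simps)
        thus False using True by simp
      qed
      thus ?thesis using c by auto
    next
      case False thus ?thesis using Fp by simp
    qed
    hence 2: "persistent sol 2" by (rule II)
    show "permanent sol" unfolding permanent_def using 1 2 by simp
  qed
qed


end
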